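(* Let $I=(N,O,\succsim)$ be a general instance and $p$ a generalized deterministic matching for $I$, with associated deterministic matching $p'$ for the associated instance $I'=(N',O',\succsim')$. Then $p$ has no envy, is individually rational and is non-wasteful if and only if $p'$ is weakly stable.
   Context: General instance: $N=\{1,\dots,n\}$ is a set of agents and $O=\{o_1,\dots,o_m\}$ a set of objects ($m,n\ge1$ arbitrary); $\emptyset$ denotes the null object (being unmatched). Each agent $i$ has a weak order $\succsim_i$ over $O\cup\{\emptyset\}$ and each object $o$ a weak order $\succsim_o$ over $N\cup\{\emptyset\}$, such that for each $(i,o)$ either $o\succ_i\emptyset$ or $\emptyset\succ_i o$, and either $i\succ_o\emptyset$ or $\emptyset\succ_o i$. $o$ is acceptable to $i$ if $o\succ_i\emptyset$, $i$ is acceptable to $o$ if $i\succ_o\emptyset$; $(i,o)$ is an acceptable pair if both hold. A generalized random matching is an $n\times m$ matrix $p$ with $p(i,o)\ge0$, $\sum_{o}p(i,o)\le1$ for each $i$, $\sum_i p(i,o)\le1$ for each $o$; it is deterministic if all entries are in $\{0,1\}$. $p$ has no envy if there exist no $i,j\in N$, $o\in O$ with $o\succ_i\emptyset$, $\sum_{o':o'\succsim_i o}p(i,o')=0$, $p(j,o)=1$ and $i\succ_o j$. $p$ is non-wasteful if there is no acceptable pair $(i,o)$ with $\sum_{o':o'\succsim_i o}p(i,o')<1$ and $\sum_{j\in N}p(j,o)<1$. $p$ is individually rational if $p(i,o)=0$ whenever $o$ is unacceptable to $i$ or $i$ is unacceptable to $o$. Associated instance: $D=\{d_1,\dots,d_m\}$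 (dummy agents), $\Phi=\{\phi_1,\dots,\phi_n\}$ (null objects), $N'=N\cup D$, $O'=O\cup\Phi$. Weak orders $\succsim'$ (blocks listed from best to worst, consecutive blocks strictly ordered): for $i\in N$: the objects acceptable to $i$ ordered by $\succsim_i$, then $\phi_i$, then $\phi_k$ ($k\ne i$) in increasing index, then the objects unacceptable to $i$ ordered by $\succsim_i$; for $o_j\in O$: agents acceptable to $o_j$ ordered by $\succsim_{o_j}$, then $d_j$, then $d_k$ ($k\neq j$) in increasing index, then agents unacceptable to $o_j$ ordered by $\succsim_{o_j}$; for $d_j$: $o_j$, then the other objects of $O$ in increasing index, then the null objects with $\phi_k\succsim'_{d_j}\phi_l$ iff $k\succsim_{o_j}l$; for $\phi_i$: $i$, then the other agents of $N$ in increasing index, then the dummy agents with $d_k\succsim'_{\phi_i}d_l$ iff $o_k\succsim_i o_l$. The associated matching $p'$ is the $(n+m)\times(n+m)$ matrix with $p'(i,o_j)=p(i,o_j)$, $p'(d_j,\phi_i)=p(i,o_j)$, $p'(i,\phi_i)=1-\sum_{o\in O}p(i,o)$, $p'(d_j,o_j)=1-\sum_{i\in N}p(i,o_j)$ and all other entries $0$. A deterministic matching $q$ for $I'$ is weakly stable if there are no $a,b\in N'$, $c,c'\in O'$ with $q(a,c')=1$, $q(b,c)=1$, $c\succ'_a c'$ and $a\succ'_c b$. *)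

theory Defs
  imports Main "HOL.Real"
begin

text \<open>Agents are indexed 0..<n, objects 0..<m (the paper uses 1..n, 1..m; only the
order of indices matters). The null object / being unmatched is None.
An agent preference P i x y means x \<succsim>_i y on objects-or-None;
an object preference Q j x y means x \<succsim>_{o_j} y on agents-or-None.\<close>

definition weak_order_on :: "'a set \<Rightarrow> ('a \<Rightarrow> 'a \<Rightarrow> bool) \<Rightarrow> bool" where
  "weak_order_on A R \<longleftrightarrow>
     (\<forall>x\<in>A. \<forall>y\<in>A. R x y \<or> R y x) \<and>
     (\<forall>x\<in>A. \<forall>y\<in>A. \<forall>z\<in>A. R x y \<longrightarrow> R y z \<longrightarrow> R x z)"

definition strict :: "('a \<Rightarrow> 'a \<Rightarrow> bool) \<Rightarrow> 'a \<Rightarrow> 'a \<Rightarrow> bool" where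
  "strict R x y \<longleftrightarrow> R x y \<and> \<not> R y x"

definition general_instance ::
  "nat \<Rightarrow> nat \<Rightarrow> (nat \<Rightarrow> nat option \<Rightarrow> nat option \<Rightarrow> bool)
       \<Rightarrow> (nat \<Rightarrow> nat option \<Rightarrow> nat option \<Rightarrow> bool) \<Rightarrow> bool" where
  "general_instance n m P Q \<longleftrightarrow>
     n \<ge> 1 \<and> m \<ge> 1 \<and>
     (\<forall>i<n. weak_order_on (insert None (Some ` {..<m})) (P i)) \<and>
     (\<forall>j<m. weak_order_on (insert None (Some ` {..<n})) (Q j)) \<and>
     (\<forall>i<n. \<forall>j<m. (strict (P i) (Some j) None \<or> strict (P i) None (Some j)) \<and>
                   (strict (Q j) (Some i) None \<or> strict (Q j) None (Some i)))"

definition agent_acc :: "(nat \<Rightarrow> nat option \<Rightarrow> nat option \<Rightarrow> bool) \<Rightarrow> nat \<Rightarrow> nat \<Rightarrow> bool" where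
  "agent_acc P i j \<longleftrightarrow> strict (P i) (Some j) None"

definition obj_acc :: "(nat \<Rightarrow> nat option \<Rightarrow> nat option \<Rightarrow> bool) \<Rightarrow> nat \<Rightarrow> nat \<Rightarrow> bool" where
  "obj_acc Q j i \<longleftrightarrow> strict (Q j) (Some i) None"

definition gen_random_matching :: "nat \<Rightarrow> nat \<Rightarrow> (nat \<Rightarrow> nat \<Rightarrow> real) \<Rightarrow> bool" where
  "gen_random_matching n m p \<longleftrightarrow>
     (\<forall>i<n. \<forall>j<m. p i j \<ge> 0) \<and>
     (\<forall>i<n. (\<Sum>j<m. p i j) \<le> 1) \<and>
     (\<forall>j<m. (\<Sum>i<n. p i j) \<le> 1)"

definition gen_det_matching :: "nat \<Rightarrow> nat \<Rightarrow> (nat \<Rightarrow> nat \<Rightarrow> real) \<Rightarrow> bool" where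
  "gen_det_matching n m p \<longleftrightarrow>
     gen_random_matching n m p \<and> (\<forall>i<n. \<forall>j<m. p i j \<in> {0, 1})"

definition upper_mass ::
  "nat \<Rightarrow> (nat \<Rightarrow> nat option \<Rightarrow> nat option \<Rightarrow> bool) \<Rightarrow> (nat \<Rightarrow> nat \<Rightarrow> real) \<Rightarrow> nat \<Rightarrow> nat \<Rightarrow> real" where
  "upper_mass m P p i ob = (\<Sum>ob'\<in>{ob'. ob' < m \<and> P i (Some ob') (Some ob)}. p i ob')"

definition no_envy ::
  "nat \<Rightarrow> nat \<Rightarrow> (nat \<Rightarrow> nat option \<Rightarrow> nat option \<Rightarrow> bool)
       \<Rightarrow> (nat \<Rightarrow> nat option \<Rightarrow> nat option \<Rightarrow> bool) \<Rightarrow> (nat \<Rightarrow> nat \<Rightarrow> real) \<Rightarrow> bool" where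
  "no_envy n m P Q p \<longleftrightarrow>
     \<not> (\<exists>i<n. \<exists>k<n. \<exists>ob<m. strict (P i) (Some ob) None \<and> upper_mass m P p i ob = 0 \<and>
            p k ob = 1 \<and> strict (Q ob) (Some i) (Some k))"

definition non_wasteful ::
  "nat \<Rightarrow> nat \<Rightarrow> (nat \<Rightarrow> nat option \<Rightarrow> nat option \<Rightarrow> bool)
       \<Rightarrow> (nat \<Rightarrow> nat option \<Rightarrow> nat option \<Rightarrow> bool) \<Rightarrow> (nat \<Rightarrow> nat \<Rightarrow> real) \<Rightarrow> bool" where
  "non_wasteful n m P Q p \<longleftrightarrow>
     \<not> (\<exists>i<n. \<exists>ob<m. agent_acc P i ob \<and> obj_acc Q ob i \<and>
            upper_mass m P p i ob < 1 \<and> (\<Sum>k<n. p k ob) < 1)"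

definition individually_rational ::
  "nat \<Rightarrow> nat \<Rightarrow> (nat \<Rightarrow> nat option \<Rightarrow> nat option \<Rightarrow> bool)
       \<Rightarrow> (nat \<Rightarrow> nat option \<Rightarrow> nat option \<Rightarrow> bool) \<Rightarrow> (nat \<Rightarrow> nat \<Rightarrow> real) \<Rightarrow> bool" where
  "individually_rational n m P Q p \<longleftrightarrow>
     (\<forall>i<n. \<forall>ob<m. (strict (P i) None (Some ob) \<or> strict (Q ob) None (Some i)) \<longrightarrow> p i ob = 0)"

text \<open>N' = N \<union> D (Ag i, Dum j = d_j), O' = O \<union> \<Phi> (Ob j = o_j, Nul i = \<phi>_i).\<close>
datatype agent' = Ag nat | Dum nat
datatype obj' = Ob nat | Nul nat

definition agents' :: "nat \<Rightarrow> nat \<Rightarrow> agent' set" where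
  "agents' n m = Ag ` {..<n} \<union> Dum ` {..<m}"

definition objs' :: "nat \<Rightarrow> nat \<Rightarrow> obj' set" where
  "objs' n m = Ob ` {..<m} \<union> Nul ` {..<n}"

definition block_pref :: "('a \<Rightarrow> nat) \<Rightarrow> ('a \<Rightarrow> 'a \<Rightarrow> bool) \<Rightarrow> 'a \<Rightarrow> 'a \<Rightarrow> bool" where
  "block_pref cls w x y \<longleftrightarrow> cls x < cls y \<or> (cls x = cls y \<and> w x y)"

fun ag_cls :: "(nat \<Rightarrow> nat option \<Rightarrow> nat option \<Rightarrow> bool) \<Rightarrow> nat \<Rightarrow> obj' \<Rightarrow> nat" where
  "ag_cls P i (Ob j) = (if agent_acc P i j then 0 else 3)"
| "ag_cls P i (Nul k) = (if k = i then 1 else 2)"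

fun ag_within :: "(nat \<Rightarrow> nat option \<Rightarrow> nat option \<Rightarrow> bool) \<Rightarrow> nat \<Rightarrow> obj' \<Rightarrow> obj' \<Rightarrow> bool" where
  "ag_within P i (Ob j) (Ob j') = P i (Some j) (Some j')"
| "ag_within P i (Nul k) (Nul l) = (k \<le> l)"
| "ag_within P i _ _ = False"

fun dum_cls :: "nat \<Rightarrow> obj' \<Rightarrow> nat" where
  "dum_cls j (Ob k) = (if k = j then 0 else 1)"
| "dum_cls j (Nul k) = 2"

fun dum_within :: "(nat \<Rightarrow> nat option \<Rightarrow> nat option \<Rightarrow> bool) \<Rightarrow> nat \<Rightarrow> obj' \<Rightarrow> obj' \<Rightarrow> bool" where
  "dum_within Q j (Ob k) (Ob l) = (k \<le> l)"
| "dum_within Q j (Nul k) (Nul l) = Q j (Some k) (Some l)"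
| "dum_within Q j _ _ = False"

fun assoc_agent_pref ::
  "(nat \<Rightarrow> nat option \<Rightarrow> nat option \<Rightarrow> bool) \<Rightarrow> (nat \<Rightarrow> nat option \<Rightarrow> nat option \<Rightarrow> bool)
     \<Rightarrow> agent' \<Rightarrow> obj' \<Rightarrow> obj' \<Rightarrow> bool" where
  "assoc_agent_pref P Q (Ag i) = block_pref (ag_cls P i) (ag_within P i)"
| "assoc_agent_pref P Q (Dum j) = block_pref (dum_cls j) (dum_within Q j)"

fun ob_cls :: "(nat \<Rightarrow> nat option \<Rightarrow> nat option \<Rightarrow> bool) \<Rightarrow> nat \<Rightarrow> agent' \<Rightarrow> nat" where
  "ob_cls Q j (Ag i) = (if obj_acc Q j i then 0 else 3)"
| "ob_cls Q j (Dum k) = (if k = j then 1 else 2)"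

fun ob_within :: "(nat \<Rightarrow> nat option \<Rightarrow> nat option \<Rightarrow> bool) \<Rightarrow> nat \<Rightarrow> agent' \<Rightarrow> agent' \<Rightarrow> bool" where
  "ob_within Q j (Ag i) (Ag i') = Q j (Some i) (Some i')"
| "ob_within Q j (Dum k) (Dum l) = (k \<le> l)"
| "ob_within Q j _ _ = False"

fun nul_cls :: "nat \<Rightarrow> agent' \<Rightarrow> nat" where
  "nul_cls i (Ag k) = (if k = i then 0 else 1)"
| "nul_cls i (Dum k) = 2"

fun nul_within :: "(nat \<Rightarrow> nat option \<Rightarrow> nat option \<Rightarrow> bool) \<Rightarrow> nat \<Rightarrow> agent' \<Rightarrow> agent' \<Rightarrow> bool" where
  "nul_within P i (Ag k) (Ag l) = (k \<le> l)"
| "nul_within P i (Dum k) (Dum l) = P i (Some k) (Some l)"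
| "nul_within P i _ _ = False"

fun assoc_obj_pref ::
  "(nat \<Rightarrow> nat option \<Rightarrow> nat option \<Rightarrow> bool) \<Rightarrow> (nat \<Rightarrow> nat option \<Rightarrow> nat option \<Rightarrow> bool)
     \<Rightarrow> obj' \<Rightarrow> agent' \<Rightarrow> agent' \<Rightarrow> bool" where
  "assoc_obj_pref P Q (Ob j) = block_pref (ob_cls Q j) (ob_within Q j)"
| "assoc_obj_pref P Q (Nul i) = block_pref (nul_cls i) (nul_within P i)"

fun assoc_matching :: "nat \<Rightarrow> nat \<Rightarrow> (nat \<Rightarrow> nat \<Rightarrow> real) \<Rightarrow> agent' \<Rightarrow> obj' \<Rightarrow> real" where
  "assoc_matching n m p (Ag i) (Ob j) = p i j"
| "assoc_matching n m p (Dum j) (Nul i) = p i j"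
| "assoc_matching n m p (Ag i) (Nul k) = (if k = i then 1 - (\<Sum>j<m. p i j) else 0)"
| "assoc_matching n m p (Dum j) (Ob k) = (if k = j then 1 - (\<Sum>i<n. p i j) else 0)"

definition weakly_stable ::
  "agent' set \<Rightarrow> obj' set \<Rightarrow> (agent' \<Rightarrow> obj' \<Rightarrow> obj' \<Rightarrow> bool) \<Rightarrow> (obj' \<Rightarrow> agent' \<Rightarrow> agent' \<Rightarrow> bool)
     \<Rightarrow> (agent' \<Rightarrow> obj' \<Rightarrow> real) \<Rightarrow> bool" where
  "weakly_stable Nset Oset RA RO q \<longleftrightarrow>
     \<not> (\<exists>a\<in>Nset. \<exists>b\<in>Nset. \<exists>c\<in>Oset. \<exists>c'\<in>Oset.
          q a c' = 1 \<and> q b c = 1 \<and> strict (RA a) c c' \<and> strict (RO c) a b)"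

end

theory Submission
  imports Defs
begin

lemma strict_block: "strict (block_pref cls w) x y \<longleftrightarrow> cls x < cls y \<or> (cls x = cls y \<and> w x y \<and> \<not> w y x)"
  unfolding strict_def block_pref_def by auto

lemma wo_strict_trans:
  assumes "weak_order_on A R" "x\<in>A" "y\<in>A" "z\<in>A" "R x y" "strict R y z"
  shows "strict R x z"
  using assms unfolding weak_order_on_def strict_def by blast

lemma wo_tot:
  assumes "weak_order_on A R" "x\<in>A" "y\<in>A"
  shows "R x y \<or> R y x"
  using assms unfolding weak_order_on_def by blast

context
  fixes n m :: nat and P Q :: "nat \<Rightarrow> nat option \<Rightarrow> nat option \<Rightarrow> bool" and p :: "nat \<Rightarrow> nat \<Rightarrow> real"
  assumes GI: "general_instance n m P Q" and DM: "gen_det_matching n m p"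
begin

lemma nonneg: "i<n \<Longrightarrow> j<m \<Longrightarrow> p i j \<ge> 0"
  using DM unfolding gen_det_matching_def gen_random_matching_def by blast
lemma zo: "i<n \<Longrightarrow> j<m \<Longrightarrow> p i j = 0 \<or> p i j = 1"
  using DM unfolding gen_det_matching_def by blast
lemma rowle: "i<n \<Longrightarrow> (\<Sum>j<m. p i j) \<le> 1"
  using DM unfolding gen_det_matching_def gen_random_matching_def by blast
lemma colle: "j<m \<Longrightarrow> (\<Sum>i<n. p i j) \<le> 1"
  using DM unfolding gen_det_matching_def gen_random_matching_def by blast

lemma row_one: assumes "i<n" "j<m" "p i j = 1" "j'<m" "j' \<noteq> j" shows "p i j' = 0"
proof -
  have "(\<Sum>k\<in>{j,j'}. p i k) \<le> (\<Sum>k<m. p i k)"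
    by (rule sum_mono2) (use assms nonneg in auto)
  then have "p i j + p i j' \<le> 1" using rowle[OF assms(1)] assms by simp
  then show ?thesis using nonneg[OF assms(1,4)] zo[OF assms(1,4)] assms by fastforce
qed

lemma col_one: assumes "i<n" "j<m" "p i j = 1" "i'<n" "i' \<noteq> i" shows "p i' j = 0"
proof -
  have "(\<Sum>k\<in>{i,i'}. p k j) \<le> (\<Sum>k<n. p k j)"
    by (rule sum_mono2) (use assms nonneg in auto)
  then have "p i j + p i' j \<le> 1" using colle[OF assms(2)] assms by simp
  then show ?thesis using nonneg[OF assms(4,2)] zo[OF assms(4,2)] assms by fastforce
qed

lemma rowsum1: assumes "i<n" "j<m" "p i j = 1" shows "(\<Sum>k<m. p i k) = 1"
proof -
  have "(\<Sum>k<m. p i k) = p i j + (\<Sum>k\<in>{..<m}-{j}. p i k)"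
    using assms by (subst sum.remove[of _ j]) auto
  also have "(\<Sum>k\<in>{..<m}-{j}. p i k) = 0"
    by (rule sum.neutral) (use row_one assms in auto)
  finally show ?thesis using assms by simp
qed

lemma colsum1: assumes "i<n" "j<m" "p i j = 1" shows "(\<Sum>k<n. p k j) = 1"
proof -
  have "(\<Sum>k<n. p k j) = p i j + (\<Sum>k\<in>{..<n}-{i}. p k j)"
    using assms by (subst sum.remove[of _ i]) auto
  also have "(\<Sum>k\<in>{..<n}-{i}. p k j) = 0"
    by (rule sum.neutral) (use col_one assms in auto)
  finally show ?thesis using assms by simp
qed

lemma rowsum0: assumes "i<n" "\<forall>j<m. p i j \<noteq> 1" shows "(\<Sum>k<m. p i k) = 0"
  by (rule sum.neutral) (use assms zo in auto)

lemma colsum0: assumes "j<m" "\<forall>i<n. p i j \<noteq> 1" shows "(\<Sum>k<n. p k j) = 0"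
  by (rule sum.neutral) (use assms zo in auto)

lemma q_AgNul: assumes "i<n" shows "assoc_matching n m p (Ag i) (Nul k) = 1 \<longleftrightarrow> k = i \<and> (\<forall>j<m. p i j \<noteq> 1)"
  using assms rowsum0 rowsum1 by auto

lemma q_DumOb: assumes "j<m" shows "assoc_matching n m p (Dum j) (Ob k) = 1 \<longleftrightarrow> k = j \<and> (\<forall>i<n. p i j \<noteq> 1)"
  using assms colsum0 colsum1 by auto

lemma um_pos: assumes "i<n" "j'<m" "p i j' = 1" "P i (Some j') (Some j)"
  shows "upper_mass m P p i j \<ge> 1"
proof -
  have "p i j' \<le> upper_mass m P p i j" unfolding upper_mass_def
    by (rule member_le_sum) (use assms nonneg in auto)
  then show ?thesis using assms by simp
qed

lemma um_zero: assumes "i<n" "\<forall>j'<m. p i j' = 1 \<longrightarrow> \<not> P i (Some j') (Some j)"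
  shows "upper_mass m P p i j = 0"
  unfolding upper_mass_def by (rule sum.neutral) (use assms zo in fastforce)

lemma Pwo: "i<n \<Longrightarrow> weak_order_on (insert None (Some ` {..<m})) (P i)"
  using GI unfolding general_instance_def by blast
lemma Qwo: "j<m \<Longrightarrow> weak_order_on (insert None (Some ` {..<n})) (Q j)"
  using GI unfolding general_instance_def by blast
lemma Pdich: "i<n \<Longrightarrow> j<m \<Longrightarrow> strict (P i) (Some j) None \<or> strict (P i) None (Some j)"
  using GI unfolding general_instance_def by blast
lemma Qdich: "i<n \<Longrightarrow> j<m \<Longrightarrow> strict (Q j) (Some i) None \<or> strict (Q j) None (Some i)"
  using GI unfolding general_instance_def by blast

lemma IR_acc: assumes IR: "individually_rational n m P Q p" "i<n" "j<m" "p i j = 1"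
  shows "agent_acc P i j \<and> obj_acc Q j i"
proof -
  have "\<not> strict (P i) None (Some j)" "\<not> strict (Q j) None (Some i)"
    using assms unfolding individually_rational_def by auto
  then show ?thesis using Pdich Qdich assms unfolding agent_acc_def obj_acc_def by blast
qed

lemma fwd:
  assumes NE: "no_envy n m P Q p" and IR: "individually_rational n m P Q p"
    and NW: "non_wasteful n m P Q p"
    and a: "a \<in> agents' n m" and b: "b \<in> agents' n m" and c: "c \<in> objs' n m" and c': "c' \<in> objs' n m"
    and q1: "assoc_matching n m p a c' = 1" and q2: "assoc_matching n m p b c = 1"
    and s1: "strict (assoc_agent_pref P Q a) c c'" and s2: "strict (assoc_obj_pref P Q c) a b"
  shows False
proof -
  from a consider (A) i where "a = Ag i" "i<n" | (D) j where "a = Dum j" "j<m"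
    unfolding agents'_def by auto
  then show False
  proof cases
    case (A i)
    have c'cases: "(\<exists>j'. j'<m \<and> c' = Ob j' \<and> p i j' = 1 \<and> agent_acc P i j') \<or> (c' = Nul i \<and> (\<forall>j<m. p i j \<noteq> 1))"
      using c' q1 A IR_acc[OF IR] q_AgNul unfolding objs'_def by auto
    from c consider (O) j where "c = Ob j" "j<m" | (N) l where "c = Nul l" "l<n"
      unfolding objs'_def by auto
    then show False
    proof cases
      case (N l)
      then show False using c'cases s1 A by (auto simp: strict_block split: if_splits)
    next
      case (O j)
      have acc: "agent_acc P i j"
        using c'cases s1 A O by (auto simp: strict_block split: if_splits)
      have um: "upper_mass m P p i j = 0"
      proof (rule um_zero[OF A(2)], intro allI impI)
        fix j'' assume "j''<m" "p i j'' = 1"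
        then have "c' = Ob j''" using c'cases row_one[OF A(2)] by force
        then show "\<not> P i (Some j'') (Some j)"
          using s1 A O acc c'cases \<open>p i j'' = 1\<close> by (auto simp: strict_block split: if_splits)
      qed
      from b consider (BA) k where "b = Ag k" "k<n" | (BD) k where "b = Dum k" "k<m"
        unfolding agents'_def by auto
      then show False
      proof cases
        case (BA k)
        have pk: "p k j = 1" using q2 BA O by simp
        have "obj_acc Q j k" using IR_acc[OF IR BA(2) O(2) pk] by blast
        moreover have "ob_cls Q j (Ag i) < ob_cls Q j (Ag k) \<or> (ob_cls Q j (Ag i) = ob_cls Q j (Ag k) \<and> ob_within Q j (Ag i) (Ag k) \<and> \<not> ob_within Q j (Ag k) (Ag i))"
          using s2 A BA O by (simp add: strict_block)
        ultimately have "strict (Q j) (Some i) (Some k)"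
          by (auto simp: strict_def split: if_splits)
        then show False using NE A BA O pk um acc unfolding no_envy_def agent_acc_def by blast
      next
        case (BD k)
        have "k = j" "\<forall>i<n. p i j \<noteq> 1" using q2 BD O q_DumOb by auto
        then have cs: "(\<Sum>k<n. p k j) = 0" using colsum0 O by simp
        have "obj_acc Q j i" using s2 A BD O \<open>k = j\<close> by (auto simp: strict_block split: if_splits)
        then show False using NW A O acc um cs unfolding non_wasteful_def by fastforce
      qed
    qed
  next
    case (D j)
    have c'cases: "(\<exists>i. i<n \<and> c' = Nul i \<and> p i j = 1) \<or> (c' = Ob j \<and> (\<forall>i<n. p i j \<noteq> 1))"
      using c' q1 D q_DumOb unfolding objs'_def by auto
    from c consider (O) k where "c = Ob k" "k<m" | (N) l where "c = Nul l" "l<n"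
      unfolding objs'_def by auto
    then show False
    proof cases
      case (O k)
      from c'cases obtain i where i: "i<n" "c' = Nul i" "p i j = 1"
        using s1 D O by (auto simp: strict_block split: if_splits)
      from b consider (BA) i' where "b = Ag i'" "i'<n" | (BD) k' where "b = Dum k'" "k'<m"
        unfolding agents'_def by auto
      then show False
      proof cases
        case (BA i')
        have "p i' k = 1" using q2 BA O by simp
        then have "obj_acc Q k i'" using IR_acc[OF IR BA(2) O(2)] by blast
        then show False using s2 D BA O by (auto simp: strict_block)
      next
        case (BD k')
        have "k' = k" "\<forall>i<n. p i k \<noteq> 1" using q2 BD O q_DumOb by auto
        then show False using s2 D BD O i by (auto simp: strict_block split: if_splits)
      qed
    next
      case (N l)
      from c'cases obtain i where i: "i<n" "c' = Nul i" "p i j = 1"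
        using s1 D N by (auto simp: strict_block split: if_splits)
      have sQ: "strict (Q j) (Some l) (Some i)" using s1 D N i by (auto simp: strict_def block_pref_def)
      from b consider (BA) i' where "b = Ag i'" "i'<n" | (BD) k' where "b = Dum k'" "k'<m"
        unfolding agents'_def by auto
      then show False
      proof cases
        case (BA i')
        then show False using q2 s2 D N by (auto simp: strict_block q_AgNul split: if_splits)
      next
        case (BD j'')
        have pl: "p l j'' = 1" using q2 BD N by simp
        have sP: "strict (P l) (Some j) (Some j'')" using s2 D BD N by (auto simp: strict_def block_pref_def)
        have "agent_acc P l j''" using IR_acc[OF IR N(2) BD(2) pl] by blast
        then have accj: "strict (P l) (Some j) None"
          using wo_strict_trans[OF Pwo[OF N(2)], of "Some j" "Some j''" None] sP D BD
          unfolding agent_acc_def strict_def by auto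
        have um: "upper_mass m P p l j = 0"
        proof (rule um_zero[OF N(2)], intro allI impI)
          fix j' assume "j'<m" "p l j' = 1"
          then have "j' = j''" using row_one[OF N(2) BD(2) pl] by force
          then show "\<not> P l (Some j') (Some j)" using sP unfolding strict_def by simp
        qed
        show False using NE N i D accj um sQ unfolding no_envy_def by blast
      qed
    qed
  qed
qed

lemma better:
  assumes "i<n" "j<m" "agent_acc P i j" "\<forall>j'<m. p i j' = 1 \<longrightarrow> \<not> P i (Some j') (Some j)"
  shows "\<exists>c'\<in>objs' n m. assoc_matching n m p (Ag i) c' = 1 \<and> strict (assoc_agent_pref P Q (Ag i)) (Ob j) c'"
proof (cases "\<exists>j'<m. p i j' = 1")
  case True
  then obtain j' where j': "j'<m" "p i j' = 1" by blast
  have np: "\<not> P i (Some j') (Some j)" using assms j' by blast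
  have "P i (Some j) (Some j')" using wo_tot[OF Pwo[OF assms(1)], of "Some j" "Some j'"] np assms j' by auto
  then have "strict (assoc_agent_pref P Q (Ag i)) (Ob j) (Ob j')"
    using np assms by (auto simp: strict_block)
  moreover have "Ob j' \<in> objs' n m" using j' unfolding objs'_def by auto
  ultimately show ?thesis using j' by force
next
  case False
  then have "assoc_matching n m p (Ag i) (Nul i) = 1" using q_AgNul[OF assms(1), of i] by simp
  moreover have "Nul i \<in> objs' n m" using assms unfolding objs'_def by auto
  moreover have "strict (assoc_agent_pref P Q (Ag i)) (Ob j) (Nul i)"
    using assms by (auto simp: strict_block)
  ultimately show ?thesis by blast
qed

lemma bwd:
  assumes WS: "weakly_stable (agents' n m) (objs' n m) (assoc_agent_pref P Q) (assoc_obj_pref P Q)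
                (assoc_matching n m p)"
  shows "no_envy n m P Q p \<and> individually_rational n m P Q p \<and> non_wasteful n m P Q p"
proof -
  have mem: "\<And>i. i<n \<Longrightarrow> Ag i \<in> agents' n m" "\<And>j. j<m \<Longrightarrow> Dum j \<in> agents' n m"
    "\<And>j. j<m \<Longrightarrow> Ob j \<in> objs' n m" "\<And>i. i<n \<Longrightarrow> Nul i \<in> objs' n m"
    unfolding agents'_def objs'_def by auto
  have NB: "\<And>a b c c'. a \<in> agents' n m \<Longrightarrow> b \<in> agents' n m \<Longrightarrow> c \<in> objs' n m \<Longrightarrow> c' \<in> objs' n m
     \<Longrightarrow> assoc_matching n m p a c' = 1 \<Longrightarrow> assoc_matching n m p b c = 1
     \<Longrightarrow> strict (assoc_agent_pref P Q a) c c' \<Longrightarrow> strict (assoc_obj_pref P Q c) a b \<Longrightarrow> False"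
    using WS unfolding weakly_stable_def by blast
  have IR: "individually_rational n m P Q p"
    unfolding individually_rational_def
  proof (intro allI impI)
    fix i j assume ij: "i<n" "j<m" and h: "strict (P i) None (Some j) \<or> strict (Q j) None (Some i)"
    show "p i j = 0"
    proof (rule ccontr)
      assume "p i j \<noteq> 0"
      then have pij: "p i j = 1" using zo ij by blast
      from h show False
      proof
        assume "strict (P i) None (Some j)"
        then have "\<not> agent_acc P i j" unfolding agent_acc_def strict_def by blast
        then have "strict (assoc_agent_pref P Q (Ag i)) (Nul i) (Ob j)"
             "strict (assoc_obj_pref P Q (Nul i)) (Ag i) (Dum j)"
          by (auto simp: strict_block)
        then show False using NB[OF mem(1)[OF ij(1)] mem(2)[OF ij(2)] mem(4)[OF ij(1)] mem(3)[OF ij(2)]] ij pij by simp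
      next
        assume "strict (Q j) None (Some i)"
        then have "\<not> obj_acc Q j i" unfolding obj_acc_def strict_def by blast
        then have "strict (assoc_agent_pref P Q (Dum j)) (Ob j) (Nul i)"
             "strict (assoc_obj_pref P Q (Ob j)) (Dum j) (Ag i)"
          by (auto simp: strict_block)
        then show False using NB[OF mem(2)[OF ij(2)] mem(1)[OF ij(1)] mem(3)[OF ij(2)] mem(4)[OF ij(1)]] ij pij by simp
      qed
    qed
  qed
  have NE: "no_envy n m P Q p"
    unfolding no_envy_def
  proof
    assume "\<exists>i<n. \<exists>k<n. \<exists>ob<m. strict (P i) (Some ob) None \<and> upper_mass m P p i ob = 0 \<and>
            p k ob = 1 \<and> strict (Q ob) (Some i) (Some k)"
    then obtain i k j where h: "i<n" "k<n" "j<m" "strict (P i) (Some j) None" "upper_mass m P p i j = 0"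
      "p k j = 1" "strict (Q j) (Some i) (Some k)" by blast
    have "\<forall>j'<m. p i j' = 1 \<longrightarrow> \<not> P i (Some j') (Some j)"
      using um_pos h by fastforce
    then obtain c' where c': "c' \<in> objs' n m" "assoc_matching n m p (Ag i) c' = 1"
      "strict (assoc_agent_pref P Q (Ag i)) (Ob j) c'"
      using better h unfolding agent_acc_def by blast
    have ak: "obj_acc Q j k" using IR_acc[OF IR h(2,3,6)] by blast
    have ai: "obj_acc Q j i"
      using wo_strict_trans[OF Qwo[OF h(3)], of "Some i" "Some k" None] h ak
      unfolding obj_acc_def strict_def by auto
    have "strict (assoc_obj_pref P Q (Ob j)) (Ag i) (Ag k)"
      using ak ai h(7) by (simp add: strict_block) (simp add: strict_def)
    then show False using NB[OF mem(1)[OF h(1)] mem(1)[OF h(2)] mem(3)[OF h(3)] c'(1) c'(2)] h c' by simp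
  qed
  have NW: "non_wasteful n m P Q p"
    unfolding non_wasteful_def
  proof
    assume "\<exists>i<n. \<exists>ob<m. agent_acc P i ob \<and> obj_acc Q ob i \<and>
            upper_mass m P p i ob < 1 \<and> (\<Sum>k<n. p k ob) < 1"
    then obtain i j where h: "i<n" "j<m" "agent_acc P i j" "obj_acc Q j i"
      "upper_mass m P p i j < 1" "(\<Sum>k<n. p k j) < 1" by blast
    have "\<forall>j'<m. p i j' = 1 \<longrightarrow> \<not> P i (Some j') (Some j)"
      using um_pos h by fastforce
    then obtain c' where c': "c' \<in> objs' n m" "assoc_matching n m p (Ag i) c' = 1"
      "strict (assoc_agent_pref P Q (Ag i)) (Ob j) c'"
      using better h by blast
    have "\<forall>i<n. p i j \<noteq> 1" using colsum1 h by fastforce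
    then have qd: "assoc_matching n m p (Dum j) (Ob j) = 1" using q_DumOb[OF h(2), of j] by simp
    have "strict (assoc_obj_pref P Q (Ob j)) (Ag i) (Dum j)"
      using h by (auto simp: strict_block)
    then show False using NB[OF mem(1)[OF h(1)] mem(2)[OF h(2)] mem(3)[OF h(2)] c'(1) c'(2) qd c'(3)] by simp
  qed
  show ?thesis using IR NE NW by blast
qed

end

theorem proposition20:
  fixes n m :: nat
    and P :: "nat \<Rightarrow> nat option \<Rightarrow> nat option \<Rightarrow> bool"
    and Q :: "nat \<Rightarrow> nat option \<Rightarrow> nat option \<Rightarrow> bool"
    and p :: "nat \<Rightarrow> nat \<Rightarrow> real"
  assumes "general_instance n m P Q"
    and "gen_det_matching n m p"
  shows "(no_envy n m P Q p \<and> individually_rational n m P Q p \<and> non_wasteful n m P Q p)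
         \<longleftrightarrow> weakly_stable (agents' n m) (objs' n m) (assoc_agent_pref P Q) (assoc_obj_pref P Q)
                (assoc_matching n m p)"
proof
  assume h: "no_envy n m P Q p \<and> individually_rational n m P Q p \<and> non_wasteful n m P Q p"
  show "weakly_stable (agents' n m) (objs' n m) (assoc_agent_pref P Q) (assoc_obj_pref P Q)
                (assoc_matching n m p)"
    unfolding weakly_stable_def
    using fwd[OF assms] h by blast
next
  assume "weakly_stable (agents' n m) (objs' n m) (assoc_agent_pref P Q) (assoc_obj_pref P Q)
                (assoc_matching n m p)"
  then show "no_envy n m P Q p \<and> individually_rational n m P Q p \<and> non_wasteful n m P Q p"
    using bwd[OF assms] by blast
qed

end
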